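(* Let $F$ be a field of characteristic two, let $\mathfrak b$ be a $4$-dimensional isotropic symmetric bilinear form over $F$, and let $K=F(\sqrt\alpha)$ for some $\alpha\in F^\times\setminus F^{\times2}$. If $\mathfrak b\otimes\langle\!\langle\alpha\rangle\!\rangle$ is (isometric to) a bilinear Pfister form, then $\mathfrak b_K$ is similar to a bilinear Pfister form.
   Context: $\langle\!\langle\alpha\rangle\!\rangle=\langle1,\alpha\rangle$; a bilinear Pfister form is a form $\langle1,\alpha_1\rangle\otimes\cdots\otimes\langle1,\alpha_n\rangle$ with $\alpha_i\in F^\times$. Two forms are similar if one is isometric to a nonzero scalar multiple of the other. $\mathfrak b_K$ is the scalar extension to $K$. *)

theory Defs
  imports "Jordan_Normal_Form.Matrix"
begin

text \<open>Symmetric bilinear forms on F^n are represented by their Gram matrices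
  (symmetric n x n matrices); every form is isometric to the form of its Gram matrix.\<close>

definition sym_bil_form :: "nat \<Rightarrow> 'a::field mat \<Rightarrow> bool" where
  "sym_bil_form n B \<longleftrightarrow> B \<in> carrier_mat n n \<and> transpose_mat B = B"

definition isometric :: "'a::field mat \<Rightarrow> 'a mat \<Rightarrow> bool" where
  "isometric A B \<longleftrightarrow> (\<exists>n P. A \<in> carrier_mat n n \<and> B \<in> carrier_mat n n \<and>
      P \<in> carrier_mat n n \<and> invertible_mat P \<and> transpose_mat P * A * P = B)"

definition isotropic :: "'a::field mat \<Rightarrow> bool" where
  "isotropic B \<longleftrightarrow> (\<exists>v. v \<in> carrier_vec (dim_row B) \<and> v \<noteq> 0\<^sub>v (dim_row B) \<and> v \<bullet> (B *\<^sub>v v) = 0)"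

definition tensor_form :: "'a::field mat \<Rightarrow> 'a mat \<Rightarrow> 'a mat" where
  "tensor_form A B = mat (dim_row A * dim_row B) (dim_col A * dim_col B)
     (\<lambda>(i,j). A $$ (i div dim_row B, j div dim_col B) * B $$ (i mod dim_row B, j mod dim_col B))"

definition pf1 :: "'a::field \<Rightarrow> 'a mat" where
  "pf1 a = mat 2 2 (\<lambda>(i,j). if i = j then (if i = 0 then 1 else a) else 0)"

fun pfister_mat :: "'a::field list \<Rightarrow> 'a mat" where
  "pfister_mat [] = mat 1 1 (\<lambda>_. 1)"
| "pfister_mat (a # as) = tensor_form (pf1 a) (pfister_mat as)"

definition is_bil_pfister :: "'a::field mat \<Rightarrow> bool" where
  "is_bil_pfister B \<longleftrightarrow> (\<exists>as. (\<forall>a\<in>set as. a \<noteq> 0) \<and> isometric B (pfister_mat as))"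

definition similar_to_bil_pfister :: "'a::field mat \<Rightarrow> bool" where
  "similar_to_bil_pfister B \<longleftrightarrow> (\<exists>c as. c \<noteq> 0 \<and> (\<forall>a\<in>set as. a \<noteq> 0) \<and>
      isometric B (c \<cdot>\<^sub>m pfister_mat as))"

end

theory Submission
  imports Defs "Jordan_Normal_Form.Determinant"
begin


definition bf :: "'a::field mat \<Rightarrow> 'a vec \<Rightarrow> 'a vec \<Rightarrow> 'a" where
  "bf A x y = x \<bullet> (A *\<^sub>v y)"

lemma bf_add_l: "A \<in> carrier_mat n n \<Longrightarrow> x \<in> carrier_vec n \<Longrightarrow> y \<in> carrier_vec n \<Longrightarrow> z \<in> carrier_vec n
  \<Longrightarrow> bf A (x + y) z = bf A x z + bf A y z"
  unfolding bf_def by (rule add_scalar_prod_distrib[of _ n], auto)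

lemma bf_add_r: "A \<in> carrier_mat n n \<Longrightarrow> x \<in> carrier_vec n \<Longrightarrow> y \<in> carrier_vec n \<Longrightarrow> z \<in> carrier_vec n
  \<Longrightarrow> bf A x (y + z) = bf A x y + bf A x z"
  unfolding bf_def by (simp add: mult_add_distrib_mat_vec[of A n n] scalar_prod_add_distrib[of _ n])

lemma bf_smult_l: "A \<in> carrier_mat n n \<Longrightarrow> x \<in> carrier_vec n \<Longrightarrow> z \<in> carrier_vec n
  \<Longrightarrow> bf A (a \<cdot>\<^sub>v x) z = a * bf A x z"
  unfolding bf_def by (rule smult_scalar_prod_distrib[of _ n], auto)

lemma bf_smult_r: "A \<in> carrier_mat n n \<Longrightarrow> x \<in> carrier_vec n \<Longrightarrow> z \<in> carrier_vec n
  \<Longrightarrow> bf A x (a \<cdot>\<^sub>v z) = a * bf A x z"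
  unfolding bf_def by (simp add: mult_mat_vec[of A n n] scalar_prod_smult_distrib[of _ n])

lemma bf_sym: "A \<in> carrier_mat n n \<Longrightarrow> transpose_mat A = A \<Longrightarrow> x \<in> carrier_vec n \<Longrightarrow> y \<in> carrier_vec n
  \<Longrightarrow> bf A x y = bf A y x"
  unfolding bf_def
  by (metis comm_scalar_prod mult_mat_vec_carrier transpose_vec_mult_scalar)

lemma bf_congr: "A \<in> carrier_mat n n \<Longrightarrow> P \<in> carrier_mat n n \<Longrightarrow> x \<in> carrier_vec n \<Longrightarrow> y \<in> carrier_vec n
  \<Longrightarrow> bf (transpose_mat P * A * P) x y = bf A (P *\<^sub>v x) (P *\<^sub>v y)"
  unfolding bf_def
proof -
  assume A: "A \<in> carrier_mat n n" and P: "P \<in> carrier_mat n n" and x: "x \<in> carrier_vec n" and y: "y \<in> carrier_vec n"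
  have "(transpose_mat P * A * P) *\<^sub>v y = transpose_mat P *\<^sub>v (A *\<^sub>v (P *\<^sub>v y))"
    using A P y by (simp add: assoc_mult_mat_vec[of _ n n _ n])
  hence "x \<bullet> ((transpose_mat P * A * P) *\<^sub>v y) = x \<bullet> (transpose_mat P *\<^sub>v (A *\<^sub>v (P *\<^sub>v y)))" by simp
  also have "\<dots> = (transpose_mat P *\<^sub>v (A *\<^sub>v (P *\<^sub>v y))) \<bullet> x"
    by (rule comm_scalar_prod[of _ n], insert A P x y, auto)
  also have "\<dots> = (A *\<^sub>v (P *\<^sub>v y)) \<bullet> (P *\<^sub>v x)"
    by (rule transpose_vec_mult_scalar[of _ n n], insert A P x y, auto)
  also have "\<dots> = (P *\<^sub>v x) \<bullet> (A *\<^sub>v (P *\<^sub>v y))"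
    by (rule comm_scalar_prod[of _ n], insert A P x y, auto)
  finally show "x \<bullet> ((transpose_mat P * A * P) *\<^sub>v y) = (P *\<^sub>v x) \<bullet> (A *\<^sub>v (P *\<^sub>v y))" .
qed

lemma bf_unit_l: "A \<in> carrier_mat n n \<Longrightarrow> x \<in> carrier_vec n \<Longrightarrow> k < n
  \<Longrightarrow> bf A (unit_vec n k) x = (A *\<^sub>v x) $ k"
  unfolding bf_def by simp

lemma bf_zero_l: "A \<in> carrier_mat n n \<Longrightarrow> x \<in> carrier_vec n \<Longrightarrow> bf A (0\<^sub>v n) x = 0"
  unfolding bf_def by simp

lemma inv_from_left:
  fixes P :: "'a::field mat"
  assumes "P \<in> carrier_mat n n" "Q \<in> carrier_mat n n" "Q * P = 1\<^sub>m n"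
  shows "invertible_mat P" "P * Q = 1\<^sub>m n"
proof -
  show "P * Q = 1\<^sub>m n" by (rule mat_mult_left_right_inverse[OF assms(2,1,3)])
  thus "invertible_mat P" using assms unfolding invertible_mat_def inverts_mat_def square_mat.simps
    by auto
qed

definition TI :: "'a::field mat \<Rightarrow> nat \<Rightarrow> bool" where
  "TI A n \<longleftrightarrow> (\<forall>y\<in>carrier_vec n. bf A y y \<noteq> 0 \<longrightarrow> (\<exists>x\<in>carrier_vec n. bf A x x = 0 \<and> bf A x y \<noteq> 0))"

lemma TI_down:
  assumes A: "A \<in> carrier_mat n n" and P: "P \<in> carrier_mat n n" and Q: "Q \<in> carrier_mat n n"
    and PQ: "P * Q = 1\<^sub>m n" and TG: "TI (transpose_mat P * A * P) n"
  shows "TI A n"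
  unfolding TI_def
proof (intro ballI impI)
  fix y assume y: "y \<in> carrier_vec n" and qy: "bf A y y \<noteq> 0"
  let ?y = "Q *\<^sub>v y"
  have Py: "P *\<^sub>v ?y = y" using P Q y PQ by (simp add: assoc_mult_mat_vec[symmetric, of _ n n _ n])
  have "bf (transpose_mat P * A * P) ?y ?y \<noteq> 0" using bf_congr[OF A P, of ?y ?y] Py qy Q y by simp
  then obtain x where x: "x \<in> carrier_vec n" "bf (transpose_mat P * A * P) x x = 0"
     "bf (transpose_mat P * A * P) x ?y \<noteq> 0"
    using TG Q y unfolding TI_def by auto
  show "\<exists>x\<in>carrier_vec n. bf A x x = 0 \<and> bf A x y \<noteq> 0"
    by (rule bexI[of _ "P *\<^sub>v x"], insert x bf_congr[OF A P, of x x] bf_congr[OF A P, of x ?y] Py P Q y, auto)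
qed

lemma TI_up:
  assumes A: "A \<in> carrier_mat n n" and P: "P \<in> carrier_mat n n" and Q: "Q \<in> carrier_mat n n"
    and PQ: "Q * P = 1\<^sub>m n" and TA: "TI A n"
  shows "TI (transpose_mat P * A * P) n"
  unfolding TI_def
proof (intro ballI impI)
  fix y assume y: "y \<in> carrier_vec n" and qy: "bf (transpose_mat P * A * P) y y \<noteq> 0"
  have qy': "bf A (P *\<^sub>v y) (P *\<^sub>v y) \<noteq> 0" using qy bf_congr[OF A P y y] by simp
  then obtain x where x: "x \<in> carrier_vec n" "bf A x x = 0" "bf A x (P *\<^sub>v y) \<noteq> 0"
    using TA P y unfolding TI_def by auto
  have Px: "P *\<^sub>v (Q *\<^sub>v x) = x"
  proof -
    have "P * Q = 1\<^sub>m n" using inv_from_left(2)[OF P Q PQ] .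
    thus ?thesis using P Q x by (simp add: assoc_mult_mat_vec[symmetric, of _ n n _ n])
  qed
  show "\<exists>x\<in>carrier_vec n. bf (transpose_mat P * A * P) x x = 0 \<and> bf (transpose_mat P * A * P) x y \<noteq> 0"
    by (rule bexI[of _ "Q *\<^sub>v x"], insert x bf_congr[OF A P, of "Q *\<^sub>v x" "Q *\<^sub>v x"]
       bf_congr[OF A P, of "Q *\<^sub>v x" y] Px P Q y, auto)
qed



lemma sum8: "(\<Sum>i<8. (f::nat\<Rightarrow>'a::comm_monoid_add) i) = f 0 + f 1 + f 2 + f 3 + f 4 + f 5 + f 6 + (f 7 :: 'a::comm_monoid_add)"
  by (simp add: eval_nat_numeral ac_simps)
lemma sum8': "(\<Sum>i\<in>{0..<8}. (f::nat\<Rightarrow>'a::comm_monoid_add) i) = f 0 + f 1 + f 2 + f 3 + f 4 + f 5 + f 6 + (f 7 :: 'a::comm_monoid_add)"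
  using sum8[of f] by (simp add: atLeast0LessThan)

lemma c2_self: "(2::'a::comm_ring_1) = 0 \<Longrightarrow> x + x = (0::'a)"
  by (metis mult_2 mult_zero_left)
lemma c2_self2: "(2::'a::comm_ring_1) = 0 \<Longrightarrow> x + (x + y) = (y::'a)"
  by (metis add.assoc add_0 c2_self)
lemma c2_sq: "(2::'a::comm_ring_1) = 0 \<Longrightarrow> (x + y)^2 = x^2 + (y::'a)^2"
  by (simp add: power2_sum)

definition Dp :: "'a::field \<Rightarrow> 'a \<Rightarrow> 'a \<Rightarrow> nat \<Rightarrow> 'a" where
  "Dp a b c i = [1, c, b, b*c, a, a*c, a*b, a*b*c] ! i"

definition xt :: "nat \<Rightarrow> nat \<Rightarrow> nat" where
  "xt u v = [[0, 1, 2, 3, 4, 5, 6, 7], [1, 0, 3, 2, 5, 4, 7, 6], [2, 3, 0, 1, 6, 7, 4, 5], [3, 2, 1, 0, 7, 6, 5, 4], [4, 5, 6, 7, 0, 1, 2, 3], [5, 4, 7, 6, 1, 0, 3, 2], [6, 7, 4, 5, 2, 3, 0, 1], [7, 6, 5, 4, 3, 2, 1, 0]] ! u ! v"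

definition atb :: "nat \<Rightarrow> nat \<Rightarrow> nat" where
  "atb u v = [[0, 1, 2, 3, 4, 5, 6, 7], [0, 0, 2, 2, 4, 4, 6, 6], [0, 1, 0, 1, 4, 5, 4, 5], [0, 0, 0, 0, 4, 4, 4, 4], [0, 1, 2, 3, 0, 1, 2, 3], [0, 0, 2, 2, 0, 0, 2, 2], [0, 1, 0, 1, 0, 1, 0, 1], [0, 0, 0, 0, 0, 0, 0, 0]] ! u ! v"

definition mulv :: "'a::field \<Rightarrow> 'a \<Rightarrow> 'a \<Rightarrow> 'a vec \<Rightarrow> 'a vec \<Rightarrow> 'a vec" where
  "mulv a b c x y = vec 8 (\<lambda>u. \<Sum>v<8. Dp a b c (atb u v) * x$v * y$(xt u v))"

lemma Id1:
  fixes a b c :: "'a::field"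
  assumes c2: "(2::'a) = 0"
  shows "(\<Sum>u<8. Dp a b c u * (mulv a b c x y $ u)^2) = (\<Sum>u<8. Dp a b c u * (y$u)^2) * (\<Sum>u<8. Dp a b c u * (x$u)^2)"
  unfolding mulv_def sum8
  apply (simp add: Dp_def xt_def atb_def)
  apply (simp only: c2_sq[OF c2] power_mult_distrib)
  using c2 by (simp add: algebra_simps power2_eq_square)

lemma Id3:
  fixes a b c :: "'a::field"
  assumes c2: "(2::'a) = 0"
  shows "(\<Sum>u<8. Dp a b c u * (mulv a b c x y $ u) * y$u) = (\<Sum>u<8. Dp a b c u * (y$u)^2) * x$0"
  unfolding mulv_def sum8 using c2
  by (simp add: Dp_def xt_def atb_def power2_eq_square algebra_simps c2_self c2_self2)



lemma dim_tf[simp]: "dim_row (tensor_form A B) = dim_row A * dim_row B" "dim_col (tensor_form A B) = dim_col A * dim_col B"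
  by (simp_all add: tensor_form_def)
lemma dim_pf1[simp]: "dim_row (pf1 a) = 2" "dim_col (pf1 a) = 2"
  by (simp_all add: pf1_def)
lemma dim_pf: "dim_row (pfister_mat as) = 2 ^ length as \<and> dim_col (pfister_mat as) = 2 ^ length as"
  by (induction as) simp_all

lemma P8_carrier: "pfister_mat [a,b,c] \<in> carrier_mat 8 8"
proof -
  have e: "2 ^ length [a,b,c] = (8::nat)" by simp
  show ?thesis unfolding carrier_mat_def using dim_pf[of "[a,b,c]"] unfolding e by blast
qed

fun pd :: "'a::field list \<Rightarrow> nat \<Rightarrow> 'a" where
  "pd [] i = 1"
| "pd (a # as) i = (if i div 2 ^ length as = 0 then 1 else a) * pd as (i mod 2 ^ length as)"

lemma pf_entry:
  "i < 2 ^ length as \<Longrightarrow> j < 2 ^ length as \<Longrightarrow> pfister_mat as $$ (i,j) = (if i = j then pd as i else 0)"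
proof (induction as arbitrary: i j)
  case Nil
  then show ?case by simp
next
  case (Cons a as)
  let ?m = "2 ^ length as :: nat"
  have m: "?m > 0" by simp
  have i2: "i < 2 * ?m" "j < 2 * ?m" using Cons.prems by simp_all
  have id: "i div ?m < 2" "j div ?m < 2"
    by (rule less_mult_imp_div_less[OF i2(1)], rule less_mult_imp_div_less[OF i2(2)])
  have md: "i mod ?m < ?m" "j mod ?m < ?m" using m by simp_all
  have "pfister_mat (a # as) $$ (i,j) = pf1 a $$ (i div ?m, j div ?m) * pfister_mat as $$ (i mod ?m, j mod ?m)"
    unfolding pfister_mat.simps(2)
    using Cons.prems dim_pf[of as] by (simp add: tensor_form_def del: pfister_mat.simps)
  also have "\<dots> = (if i = j then pd (a # as) i else 0)"
  proof -
    have eq: "i = j \<longleftrightarrow> i div ?m = j div ?m \<and> i mod ?m = j mod ?m" 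
    proof
      assume "i div ?m = j div ?m \<and> i mod ?m = j mod ?m"
      hence H: "i div ?m = j div ?m" "i mod ?m = j mod ?m" by auto
      have "i = i div ?m * ?m + i mod ?m" by (rule div_mult_mod_eq[symmetric])
      also have "\<dots> = j div ?m * ?m + j mod ?m" unfolding H ..
      also have "\<dots> = j" by (rule div_mult_mod_eq)
      finally show "i = j" .
    qed simp
    have p: "pf1 a $$ (i div ?m, j div ?m) = (if i div ?m = j div ?m then (if i div ?m = 0 then 1 else a) else 0)"
      using id by (simp add: pf1_def)
    show ?thesis unfolding p Cons.IH[OF md] eq pd.simps by simp
  qed
  finally show ?case .
qed

lemma lt8: "i < (8::nat) \<Longrightarrow> i = 0 \<or> i = 1 \<or> i = 2 \<or> i = 3 \<or> i = 4 \<or> i = 5 \<or> i = 6 \<or> i = 7"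
  by auto

lemma P8_entry:
  fixes a b c :: "'a::field"
  assumes "i < 8" "j < 8"
  shows "pfister_mat [a,b,c] $$ (i,j) = (if i = j then Dp a b c i else 0)"
proof -
  have e: "2 ^ length [a,b,c] = (8::nat)" by simp
  have X: "pfister_mat [a,b,c] $$ (i,j) = (if i = j then pd [a,b,c] i else 0)"
    by (rule pf_entry, unfold e, fact assms(1), fact assms(2))
  have Y: "pd [a,b,c] i = Dp a b c i"
    using lt8[OF assms(1)] by (elim disjE) (simp_all add: Dp_def)
  show ?thesis unfolding X Y by (rule refl)
qed

declare pfister_mat.simps[simp del]

lemma P8_mv:
  fixes a b c :: "'a::field"
  assumes y: "y \<in> carrier_vec 8" and i: "i < 8"
  shows "(pfister_mat [a,b,c] *\<^sub>v y) $ i = Dp a b c i * y $ i"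
proof -
  have "(pfister_mat [a,b,c] *\<^sub>v y) $ i = (\<Sum>j\<in>{0..<8}. pfister_mat [a,b,c] $$ (i,j) * y $ j)"
    using P8_carrier[of a b c] i y by (simp add: scalar_prod_def)
  also have "\<dots> = (\<Sum>j\<in>{0..<8}. (if j = i then Dp a b c i * y $ i else 0))"
    by (rule sum.cong, insert i, auto simp: P8_entry)
  also have "\<dots> = Dp a b c i * y $ i" using i by simp
  finally show ?thesis .
qed

lemma bf_P8:
  fixes a b c :: "'a::field"
  assumes x: "x \<in> carrier_vec 8" and y: "y \<in> carrier_vec 8"
  shows "bf (pfister_mat [a,b,c]) x y = (\<Sum>u<8. Dp a b c u * x$u * y$u)"
proof -
  have "bf (pfister_mat [a,b,c]) x y = (\<Sum>u\<in>{0..<8}. x $ u * (pfister_mat [a,b,c] *\<^sub>v y) $ u)"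
    unfolding bf_def scalar_prod_def using P8_carrier[of a b c] y by simp
  also have "\<dots> = (\<Sum>u\<in>{0..<8}. Dp a b c u * x$u * y$u)"
    by (rule sum.cong, auto simp: P8_mv[OF y])
  finally show ?thesis by (simp add: atLeast0LessThan)
qed

lemma Dp_nz: assumes "a \<noteq> 0" "b \<noteq> 0" "c \<noteq> 0" "i < 8" shows "Dp a b c i \<noteq> (0::'a::field)"
  using lt8[OF assms(4)] assms(1-3) by (elim disjE) (simp_all add: Dp_def)

lemma mulv_carrier[simp]: "mulv a b c x y \<in> carrier_vec 8"
  unfolding mulv_def by simp

lemma TI_P8:
  fixes a b c :: "'a::field"
  assumes c2: "(2::'a) = 0" and nz: "a \<noteq> 0" "b \<noteq> 0" "c \<noteq> 0"
    and x0: "x0 \<in> carrier_vec 8" "x0 \<noteq> 0\<^sub>v 8" "bf (pfister_mat [a,b,c]) x0 x0 = 0"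
  shows "TI (pfister_mat [a,b,c]) 8"
  unfolding TI_def
proof (intro ballI impI)
  fix y :: "'a vec" assume y: "y \<in> carrier_vec 8" and qy: "bf (pfister_mat [a,b,c]) y y \<noteq> 0"
  obtain S where S: "S < 8" "x0 $ S \<noteq> 0"
    using x0(1,2) by (metis carrier_vecD eq_vecI index_zero_vec(1,2))
  define e where "e = (unit_vec 8 S :: 'a vec)"
  have e: "e \<in> carrier_vec 8" unfolding e_def by simp
  define x1 where "x1 = mulv a b c x0 e"
  have qx0: "(\<Sum>u<8. Dp a b c u * (x0$u)^2) = 0"
    using x0(3) bf_P8[OF x0(1) x0(1), of a b c] by (simp add: power2_eq_square mult.assoc)
  have qx1: "(\<Sum>u<8. Dp a b c u * (x1$u)^2) = 0"
    unfolding x1_def Id1[OF c2] qx0 by simp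
  have x10: "x1 $ 0 = Dp a b c S * x0 $ S"
    unfolding x1_def mulv_def e_def using lt8[OF S(1)]
    by (elim disjE) (simp_all add: sum8 xt_def atb_def Dp_def)
  define z where "z = mulv a b c x1 y"
  have qz: "bf (pfister_mat [a,b,c]) z z = 0"
  proof -
    have "(\<Sum>u<8. Dp a b c u * (z$u)^2) = 0"
      unfolding z_def Id1[OF c2] qx1 by simp
    thus ?thesis unfolding bf_P8[OF mulv_carrier mulv_carrier] z_def by (simp add: power2_eq_square mult.assoc)
  qed
  have bz: "bf (pfister_mat [a,b,c]) z y \<noteq> 0"
  proof -
    have "bf (pfister_mat [a,b,c]) z y = (\<Sum>u<8. Dp a b c u * (y$u)^2) * x1$0"
      unfolding bf_P8[OF mulv_carrier y] z_def Id3[OF c2] ..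
    also have "(\<Sum>u<8. Dp a b c u * (y$u)^2) = bf (pfister_mat [a,b,c]) y y"
      unfolding bf_P8[OF y y] by (simp add: power2_eq_square mult.assoc)
    finally show ?thesis using qy x10 Dp_nz[OF nz S(1)] S(2) by simp
  qed
  show "\<exists>x\<in>carrier_vec 8. bf (pfister_mat [a, b, c]) x x = 0 \<and> bf (pfister_mat [a, b, c]) x y \<noteq> 0"
    using qz bz unfolding z_def by auto
qed



lemma entry_bf: "M \<in> carrier_mat n n \<Longrightarrow> i < n \<Longrightarrow> j < n \<Longrightarrow> M $$ (i,j) = bf M (unit_vec n i) (unit_vec n j)"
  unfolding bf_def by simp

lemma mv_unit: fixes P :: "'a::field mat" assumes P: "P \<in> carrier_mat n n" and j: "j < n" shows "P *\<^sub>v unit_vec n j = col P j"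
  using carrier_matD[OF P] j by (intro eq_vecI) auto

lemma entry_congr:
  assumes A: "A \<in> carrier_mat n n" and P: "P \<in> carrier_mat n n" and ij: "i < n" "j < n"
  shows "(transpose_mat P * A * P) $$ (i,j) = bf A (col P i) (col P j)"
proof -
  have "(transpose_mat P * A * P) $$ (i,j) = bf (transpose_mat P * A * P) (unit_vec n i) (unit_vec n j)"
    by (rule entry_bf, insert A P ij, auto)
  also have "\<dots> = bf A (col P i) (col P j)"
    unfolding bf_congr[OF A P unit_vec_carrier unit_vec_carrier] mv_unit[OF P ij(1)] mv_unit[OF P ij(2)] ..
  finally show ?thesis .
qed

lemma congr_inv:
  fixes A :: "'a::field mat"
  assumes A: "A \<in> carrier_mat n n" and P: "P \<in> carrier_mat n n" and Gi: "Gi \<in> carrier_mat n n"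
    and GG: "Gi * (transpose_mat P * A * P) = 1\<^sub>m n"
  shows "invertible_mat P" "(Gi * transpose_mat P * A) * P = 1\<^sub>m n" "P * (Gi * transpose_mat P * A) = 1\<^sub>m n"
    "Gi * transpose_mat P * A \<in> carrier_mat n n"
proof -
  show c: "Gi * transpose_mat P * A \<in> carrier_mat n n" using A P Gi by auto
  have "(Gi * transpose_mat P * A) * P = Gi * (transpose_mat P * A * P)"
    using A P Gi by (simp add: assoc_mult_mat[of _ n n _ n _ n])
  thus l: "(Gi * transpose_mat P * A) * P = 1\<^sub>m n" using GG by simp
  show "invertible_mat P" "P * (Gi * transpose_mat P * A) = 1\<^sub>m n" using inv_from_left[OF P c l] by auto
qed

lemma no4in3:
  fixes p q r :: "'a::field vec"
  assumes pqr: "p \<in> carrier_vec 4" "q \<in> carrier_vec 4" "r \<in> carrier_vec 4"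
    and sp: "\<And>l. l < 4 \<Longrightarrow> \<exists>\<alpha> \<beta> \<gamma>. unit_vec 4 l = \<alpha> \<cdot>\<^sub>v p + \<beta> \<cdot>\<^sub>v q + \<gamma> \<cdot>\<^sub>v r"
  shows False
proof -
  obtain f g h where fgh: "\<And>l. l < 4 \<Longrightarrow> unit_vec 4 l = f l \<cdot>\<^sub>v p + g l \<cdot>\<^sub>v q + h l \<cdot>\<^sub>v r"
    using sp by metis
  define M where "M = mat_of_cols 4 [p, q, r, 0\<^sub>v 4]"
  define C where "C = mat 4 4 (\<lambda>(i,l). if i = 0 then f l else if i = 1 then g l else if i = 2 then h l else (0::'a))"
  have M: "M \<in> carrier_mat 4 4" unfolding M_def carrier_mat_def mat_of_cols_def by simp
  have C: "C \<in> carrier_mat 4 4" unfolding C_def by simp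
  have MC: "M * C = 1\<^sub>m 4"
  proof (rule eq_matI)
    fix i l assume i: "i < dim_row (1\<^sub>m 4 :: 'a mat)" and l: "l < dim_col (1\<^sub>m 4 :: 'a mat)"
    have e: "unit_vec 4 l $ i = f l * p $ i + g l * q $ i + h l * r $ i"
      using fgh[of l] l i pqr by simp
    have "(M * C) $$ (i,l) = (\<Sum>j\<in>{0..<4}. M $$ (i,j) * C $$ (j,l))"
      using M C i l by (simp add: scalar_prod_def)
    also have "\<dots> = p $ i * f l + q $ i * g l + r $ i * h l"
      using i l by (simp add: M_def C_def numeral_eq_Suc atLeast0LessThan lessThan_Suc mat_of_cols_def)
    also have "\<dots> = 1\<^sub>m 4 $$ (i,l)" using e i l by (simp add: ac_simps)
    finally show "(M * C) $$ (i,l) = 1\<^sub>m 4 $$ (i,l)" .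
  qed (insert M C, auto)
  have CM: "C * M = 1\<^sub>m 4" by (rule mat_mult_left_right_inverse[OF M C MC])
  have "(C * M) $$ (3,3) = row C 3 \<bullet> col M 3" using C M by simp
  also have "col M 3 = 0\<^sub>v 4" unfolding M_def by (subst col_mat_of_cols, auto)
  also have "row C 3 \<bullet> 0\<^sub>v 4 = 0" unfolding scalar_prod_def by simp
  finally show False unfolding CM by simp
qed

lemma sum4: "(\<Sum>i\<in>{0..<4}. (f::nat\<Rightarrow>'a::comm_monoid_add) i) = f 0 + f 1 + f 2 + f 3"
  by (simp add: numeral_eq_Suc atLeast0LessThan lessThan_Suc ac_simps)

lemma lt4: "i < (4::nat) \<Longrightarrow> i = 0 \<or> i = 1 \<or> i = 2 \<or> i = 3"
  by auto

lemma c2_eq: "(2::'a::comm_ring_1) = 0 \<Longrightarrow> a + b = 0 \<Longrightarrow> a = (b::'a)"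
  by (metis add.commute add_diff_cancel_left' c2_self diff_0)

definition Gm :: "'a::field \<Rightarrow> 'a \<Rightarrow> 'a \<Rightarrow> 'a mat" where
  "Gm c d e = mat 4 4 (\<lambda>(i,j). [[0,1,0,0],[1,c,0,0],[0,0,d,0],[0,0,0,e]] ! i ! j)"

lemma Gm_carrier: "Gm c d e \<in> carrier_mat 4 4" unfolding Gm_def by simp

lemma bfG:
  assumes x: "x \<in> carrier_vec 4" and y: "y \<in> carrier_vec 4"
  shows "bf (Gm c d e) x y = x$0*y$1 + x$1*y$0 + c*x$1*y$1 + d*x$2*y$2 + e*x$3*y$3"
proof -
  have mv: "(Gm c d e *\<^sub>v y) $ i = (\<Sum>j\<in>{0..<4}. Gm c d e $$ (i,j) * y $ j)" if "i < 4" for i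
    using that y Gm_carrier[of c d e] by (simp add: scalar_prod_def)
  show ?thesis
    unfolding bf_def scalar_prod_def using x y Gm_carrier[of c d e]
    by (simp add: sum4 Gm_def scalar_prod_def algebra_simps)
qed

lemma G_contra:
  fixes c d e :: "'a::field"
  assumes c2: "(2::'a) = 0" and d: "d \<noteq> 0" and e: "e \<noteq> 0"
    and an: "\<And>X Y. d * X^2 + e * Y^2 = 0 \<Longrightarrow> X = 0"
    and ti: "TI (Gm c d e) 4"
  shows False
proof (cases "\<exists>p q. c = p^2 * d + q^2 * e")
  case True
  then obtain p q where pq: "c = p^2 * d + q^2 * e" by auto
  define y :: "'a vec" where "y = vec 4 (\<lambda>i. [p*d, 0, 1, 0] ! i)"
  have y: "y \<in> carrier_vec 4" unfolding y_def by simp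
  have qy: "bf (Gm c d e) y y = d" unfolding bfG[OF y y] by (simp add: y_def)
  then obtain x where x: "x \<in> carrier_vec 4" "bf (Gm c d e) x x = 0" "bf (Gm c d e) x y \<noteq> 0"
    using ti y d unfolding TI_def by auto
  have "d * (p * x$1 + x$2)^2 + e * (q * x$1 + x$3)^2 = bf (Gm c d e) x x"
    unfolding bfG[OF x(1) x(1)] pq using c2 by (simp add: power2_eq_square algebra_simps)
  hence "p * x$1 + x$2 = 0" using x(2) an by simp
  moreover have "bf (Gm c d e) x y = d * (p * x$1 + x$2)" unfolding bfG[OF x(1) y] by (simp add: y_def algebra_simps)
  ultimately show False using x(3) by simp
next
  case False
  define y :: "'a vec" where "y = vec 4 (\<lambda>i. [0, 0, 1, 0] ! i)"
  have y: "y \<in> carrier_vec 4" unfolding y_def by simp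
  have qy: "bf (Gm c d e) y y = d" unfolding bfG[OF y y] by (simp add: y_def)
  then obtain x where x: "x \<in> carrier_vec 4" "bf (Gm c d e) x x = 0" "bf (Gm c d e) x y \<noteq> 0"
    using ti y d unfolding TI_def by auto
  have q: "c * (x$1)^2 + (d * (x$2)^2 + e * (x$3)^2) = 0"
    using x(2) unfolding bfG[OF x(1) x(1)] using c2 by (simp add: power2_eq_square algebra_simps)
  have x1: "x$1 = 0"
  proof (rule ccontr)
    assume nz: "x$1 \<noteq> 0"
    have "c * (x$1)^2 = d * (x$2)^2 + e * (x$3)^2" using c2_eq[OF c2 q] .
    hence "c = (x$2/x$1)^2 * d + (x$3/x$1)^2 * e" using nz by (simp add: field_simps)
    thus False using False by blast
  qed
  have "x$2 = 0" using q x1 an by simp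
  moreover have "bf (Gm c d e) x y = d * x$2" unfolding bfG[OF x(1) y] by (simp add: y_def)
  ultimately show False using x(3) by simp
qed

lemma P4_carrier: "pfister_mat [x,y] \<in> carrier_mat 4 4"
proof -
  have e: "2 ^ length [x,y] = (4::nat)" by simp
  show ?thesis unfolding carrier_mat_def using dim_pf[of "[x,y]"] unfolding e by blast
qed

lemma P4_entry:
  fixes x y :: "'a::field"
  assumes "i < 4" "j < 4"
  shows "pfister_mat [x,y] $$ (i,j) = (if i = j then [1, y, x, x*y] ! i else 0)"
proof -
  have e: "2 ^ length [x,y] = (4::nat)" by simp
  have X: "pfister_mat [x,y] $$ (i,j) = (if i = j then pd [x,y] i else 0)"
    by (rule pf_entry, unfold e, fact assms(1), fact assms(2))
  have Y: "pd [x,y] i = [1, y, x, x*y] ! i"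
    using lt4[OF assms(1)] by (elim disjE) simp_all
  show ?thesis unfolding X Y by (rule refl)
qed

lemma final4:
  fixes A :: "'a::field mat"
  assumes A: "A \<in> carrier_mat 4 4" and sym: "transpose_mat A = A"
    and p: "ra \<in> carrier_vec 4" "rb \<in> carrier_vec 4" "rc \<in> carrier_vec 4" "rd \<in> carrier_vec 4"
    and o: "bf A ra rb = 0" "bf A ra rc = 0" "bf A ra rd = 0" "bf A rb rc = 0" "bf A rb rd = 0" "bf A rc rd = 0"
    and q: "bf A ra ra = c" "bf A rb rb = c * y" "bf A rc rc = c * x" "bf A rd rd = c * x * y"
    and nz: "c \<noteq> 0" "x \<noteq> 0" "y \<noteq> 0"
  shows "similar_to_bil_pfister A"
proof -
  define P where "P = mat_of_cols 4 [ra, rb, rc, rd]"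
  have P: "P \<in> carrier_mat 4 4" unfolding P_def carrier_mat_def mat_of_cols_def by simp
  have colP: "col P i = [ra, rb, rc, rd] ! i" if "i < 4" for i
    unfolding P_def using that p by (subst col_mat_of_cols, auto simp: less_Suc_eq numeral_eq_Suc)
  have o': "bf A rb ra = 0" "bf A rc ra = 0" "bf A rd ra = 0" "bf A rc rb = 0" "bf A rd rb = 0" "bf A rd rc = 0"
    using o bf_sym[OF A sym] p by metis+
  define T where "T = c \<cdot>\<^sub>m pfister_mat [x,y]"
  have T: "T \<in> carrier_mat 4 4" unfolding T_def using P4_carrier[of x y] by simp
  have Te: "T $$ (i,j) = (if i = j then c * [1, y, x, x*y] ! i else 0)" if "i < 4" "j < 4" for i j
    unfolding T_def using that P4_carrier[of x y] by (simp add: P4_entry)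
  have eq: "transpose_mat P * A * P = T"
  proof (rule eq_matI)
    fix i j assume i: "i < dim_row T" and j: "j < dim_col T"
    hence i4: "i < 4" and j4: "j < 4" using T by auto
    show "(transpose_mat P * A * P) $$ (i,j) = T $$ (i,j)"
      unfolding entry_congr[OF A P i4 j4] Te[OF i4 j4] colP[OF i4] colP[OF j4]
      using lt4[OF i4] lt4[OF j4] o o' q by (elim disjE) (simp_all add: ac_simps)
  qed (insert P A T, auto)
  define Di where "Di = mat 4 4 (\<lambda>(i,j). if i = j then 1 / (c * [1, y, x, x*y] ! i) else (0::'a))"
  have Di: "Di \<in> carrier_mat 4 4" unfolding Di_def by simp
  have DT: "Di * T = 1\<^sub>m 4"
  proof (rule eq_matI)
    fix i j assume i: "i < dim_row (1\<^sub>m 4 :: 'a mat)" and j: "j < dim_col (1\<^sub>m 4 :: 'a mat)"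
    hence i4: "i < 4" and j4: "j < 4" by auto
    have "(Di * T) $$ (i,j) = (\<Sum>k\<in>{0..<4}. Di $$ (i,k) * T $$ (k,j))"
      using Di T i4 j4 by (simp add: scalar_prod_def)
    also have "\<dots> = 1\<^sub>m 4 $$ (i,j)"
      unfolding sum4 using lt4[OF i4] lt4[OF j4] nz by (elim disjE) (simp_all add: Te Di_def)
    finally show "(Di * T) $$ (i,j) = 1\<^sub>m 4 $$ (i,j)" .
  qed (insert Di T, auto)
  have inv: "invertible_mat P" using congr_inv(1)[OF A P Di] DT eq by simp
  show ?thesis unfolding similar_to_bil_pfister_def isometric_def
    by (rule exI[of _ c], rule exI[of _ "[x,y]"], intro conjI, use nz in auto,
        intro exI[of _ 4] exI[of _ P], insert A P inv eq T, auto simp: T_def)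
qed

lemma vec_c2_dec:
  fixes e p q r :: "'a::field vec"
  assumes c2: "(2::'a) = 0" and cv: "e \<in> carrier_vec n" "p \<in> carrier_vec n" "q \<in> carrier_vec n" "r \<in> carrier_vec n"
   and z: "e + \<alpha> \<cdot>\<^sub>v p + \<beta> \<cdot>\<^sub>v q + \<gamma> \<cdot>\<^sub>v r = 0\<^sub>v n"
  shows "e = \<alpha> \<cdot>\<^sub>v p + \<beta> \<cdot>\<^sub>v q + \<gamma> \<cdot>\<^sub>v r"
proof (rule eq_vecI)
  fix i assume "i < dim_vec (\<alpha> \<cdot>\<^sub>v p + \<beta> \<cdot>\<^sub>v q + \<gamma> \<cdot>\<^sub>v r)"
  hence i: "i < n" using cv by simp
  have "(e + \<alpha> \<cdot>\<^sub>v p + \<beta> \<cdot>\<^sub>v q + \<gamma> \<cdot>\<^sub>v r) $ i = 0" using z i by simp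
  hence "e $ i + (\<alpha> * p$i + \<beta> * q$i + \<gamma> * r$i) = 0" using cv i by (simp add: add.assoc)
  hence "e $ i = \<alpha> * p$i + \<beta> * q$i + \<gamma> * r$i" by (rule c2_eq[OF c2])
  thus "e $ i = (\<alpha> \<cdot>\<^sub>v p + \<beta> \<cdot>\<^sub>v q + \<gamma> \<cdot>\<^sub>v r) $ i" using cv i by simp
qed (insert cv, simp)

lemma proj_contra:
  fixes A :: "'a::field mat"
  assumes c2: "(2::'a) = 0" and A: "A \<in> carrier_mat 4 4" and sym: "transpose_mat A = A"
   and nd: "\<forall>x\<in>carrier_vec 4. A *\<^sub>v x = 0\<^sub>v 4 \<longrightarrow> x = 0\<^sub>v 4"
   and pqr: "p \<in> carrier_vec 4" "q \<in> carrier_vec 4" "r \<in> carrier_vec 4"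
   and fd: "\<And>l. l < 4 \<Longrightarrow> f l = unit_vec 4 l + \<alpha> l \<cdot>\<^sub>v p + \<beta> l \<cdot>\<^sub>v q + \<gamma> l \<cdot>\<^sub>v r"
   and orth: "\<And>l. l < 4 \<Longrightarrow> bf A (f l) p = 0" "\<And>l. l < 4 \<Longrightarrow> bf A (f l) q = 0"
     "\<And>l. l < 4 \<Longrightarrow> bf A (f l) r = 0"
   and zero: "\<And>l m. l < 4 \<Longrightarrow> m < 4 \<Longrightarrow> bf A (f l) (f m) = 0"
  shows False
proof -
  have fc: "f l \<in> carrier_vec 4" if "l < 4" for l using fd[OF that] pqr by simp
  have f0: "f l = 0\<^sub>v 4" if l: "l < 4" for l
  proof -
    have "A *\<^sub>v f l = 0\<^sub>v 4"
    proof (rule eq_vecI)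
      fix m assume "m < dim_vec (0\<^sub>v 4 :: 'a vec)" hence m: "m < 4" by simp
      have "(A *\<^sub>v f l) $ m = bf A (unit_vec 4 m) (f l)" using bf_unit_l[OF A fc[OF l] m] by simp
      also have "\<dots> = bf A (f l) (unit_vec 4 m)" using bf_sym[OF A sym unit_vec_carrier fc[OF l]] .
      also have "\<dots> = bf A (f l) (f m)" using fd[OF m] orth[OF l] pqr fc[OF l]
        by (simp add: bf_add_r[OF A] bf_smult_r[OF A])
      also have "\<dots> = 0" using zero[OF l m] .
      finally show "(A *\<^sub>v f l) $ m = 0\<^sub>v 4 $ m" using m by simp
    qed (insert A, simp)
    thus ?thesis using nd fc[OF l] by blast
  qed
  show False
  proof (rule no4in3[OF pqr])
    fix l :: nat assume l: "l < 4"
    show "\<exists>a b g. unit_vec 4 l = a \<cdot>\<^sub>v p + b \<cdot>\<^sub>v q + g \<cdot>\<^sub>v r"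
      using vec_c2_dec[OF c2 unit_vec_carrier pqr, where \<alpha>="\<alpha> l" and \<beta>="\<beta> l" and \<gamma>="\<gamma> l"] fd[OF l] f0[OF l] by auto
  qed
qed



lemma geom:
  fixes A :: "'a::field mat"
  assumes c2: "(2::'a) = 0" and A: "A \<in> carrier_mat 4 4" and sym: "transpose_mat A = A"
    and nd: "\<forall>x\<in>carrier_vec 4. A *\<^sub>v x = 0\<^sub>v 4 \<longrightarrow> x = 0\<^sub>v 4"
    and z: "z \<in> carrier_vec 4" "bf A z z \<noteq> 0"
    and v1: "v1 \<in> carrier_vec 4" "v1 \<noteq> 0\<^sub>v 4" "bf A v1 v1 = 0"
    and ti: "TI A 4"
  shows "similar_to_bil_pfister A"
proof -
  note bl = bf_add_l[OF A] bf_add_r[OF A] bf_smult_l[OF A] bf_smult_r[OF A]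
  have bs: "\<And>x y. x \<in> carrier_vec 4 \<Longrightarrow> y \<in> carrier_vec 4 \<Longrightarrow> bf A x y = bf A y x"
    using bf_sym[OF A sym] by blast
  note c2s = c2_self[OF c2] c2_self2[OF c2]
  obtain w0 where w0: "w0 \<in> carrier_vec 4" "bf A v1 w0 \<noteq> 0"
  proof -
    have nz: "A *\<^sub>v v1 \<noteq> 0\<^sub>v 4" using nd v1 by blast
    have "\<exists>k<4. (A *\<^sub>v v1) $ k \<noteq> 0"
    proof (rule ccontr)
      assume "\<not> ?thesis"
      hence "A *\<^sub>v v1 = 0\<^sub>v 4" using A by (intro eq_vecI) auto
      thus False using nz by simp
    qed
    then obtain k where k: "k < 4" "(A *\<^sub>v v1) $ k \<noteq> 0" by auto
    have "bf A (unit_vec 4 k) v1 \<noteq> 0" using bf_unit_l[OF A v1(1) k(1)] k by simp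
    hence "bf A v1 (unit_vec 4 k) \<noteq> 0" using bs[OF unit_vec_carrier v1(1)] by simp
    thus ?thesis using that[of "unit_vec 4 k"] by simp
  qed
  obtain w1 where w1: "w1 \<in> carrier_vec 4" "bf A v1 w1 = 1" "bf A w1 w1 \<noteq> 0"
  proof -
    define w0' where "w0' = (1 / bf A v1 w0) \<cdot>\<^sub>v w0"
    have w0': "w0' \<in> carrier_vec 4" "bf A v1 w0' = 1" using w0 v1 unfolding w0'_def by (auto simp: bl)
    show ?thesis
    proof (cases "bf A v1 z = 0")
      case False
      show ?thesis by (rule that[of "(1 / bf A v1 z) \<cdot>\<^sub>v z"], insert z v1 False, auto simp: bl)
    next
      case True
      show ?thesis
      proof (cases "bf A w0' w0' = 0")
        case False thus ?thesis using that w0' by blast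
      next
        case True2: True
        have "bf A (w0' + z) (w0' + z) = bf A w0' w0' + (bf A w0' z + bf A w0' z) + bf A z z"
          using w0' z bs[of z w0'] by (simp add: bl algebra_simps)
        hence q: "bf A (w0' + z) (w0' + z) = bf A z z" using True2 c2s by simp
        show ?thesis
        proof (rule that[of "w0' + z"])
          show "w0' + z \<in> carrier_vec 4" using w0' z by simp
          show "bf A v1 (w0' + z) = 1" using w0' z v1 True by (simp add: bl)
          show "bf A (w0' + z) (w0' + z) \<noteq> 0" unfolding q by (rule z(2))
        qed
      qed
    qed
  qed
  define c where "c = bf A w1 w1"
  have c: "c \<noteq> 0" using w1 c_def by simp
  have wv: "bf A w1 v1 = 1" using bs[OF w1(1) v1(1)] w1(2) by simp
  define Uv where "Uv u \<longleftrightarrow> u \<in> carrier_vec 4 \<and> bf A u v1 = 0 \<and> bf A u w1 = 0" for u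
  have caseI: "?thesis" if u: "Uv u" "Uv u'" "bf A u u = 0" "bf A u' u' = 0" "bf A u u' \<noteq> 0" for u u'
  proof -
    define u2 where "u2 = (1 / bf A u u') \<cdot>\<^sub>v u'"
    have uc: "u \<in> carrier_vec 4" "u2 \<in> carrier_vec 4" "u' \<in> carrier_vec 4" using u unfolding Uv_def u2_def by auto
    have f: "bf A u v1 = 0" "bf A u w1 = 0" "bf A u2 v1 = 0" "bf A u2 w1 = 0" "bf A u u = 0" "bf A u u2 = 1"
      using u uc v1(1) w1(1) unfolding Uv_def u2_def by (auto simp: bl)
    have f': "bf A v1 u = 0" "bf A w1 u = 0" "bf A v1 u2 = 0" "bf A w1 u2 = 0" "bf A u2 u = 1"
      using f bs[OF v1(1) uc(1)] bs[OF w1(1) uc(1)] bs[OF v1(1) uc(2)] bs[OF w1(1) uc(2)] bs[OF uc(2) uc(1)] by auto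
    have q2: "bf A u2 u2 = 0" using u uc v1(1) w1(1) unfolding u2_def by (auto simp: bl)
    note facts = f f' q2 v1(3) w1(2) wv c_def[symmetric]
    show ?thesis
      by (rule final4[where ra="w1 + c \<cdot>\<^sub>v u + u2" and rb="w1 + u2" and rc="w1 + c \<cdot>\<^sub>v u"
          and rd="w1 + c \<cdot>\<^sub>v v1" and c=c and x=1 and y=1, OF A sym],
        insert uc v1 w1 c, auto simp: bl facts c2s algebra_simps)
  qed
  have caseII: "?thesis" if u: "Uv u1" "Uv u2" "bf A u1 u1 \<noteq> 0" "bf A u2 u2 \<noteq> 0" "bf A u1 u2 = 0" for u1 u2
  proof -
    define d where "d = bf A u1 u1"
    define e where "e = bf A u2 u2"
    have de: "d \<noteq> 0" "e \<noteq> 0" using u d_def e_def by auto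
    have uc: "u1 \<in> carrier_vec 4" "u2 \<in> carrier_vec 4" using u unfolding Uv_def by auto
    have f: "bf A u1 v1 = 0" "bf A u1 w1 = 0" "bf A u2 v1 = 0" "bf A u2 w1 = 0" "bf A u1 u2 = 0"
      "bf A u1 u1 = d" "bf A u2 u2 = e"
      using u unfolding Uv_def d_def e_def by auto
    have f': "bf A v1 u1 = 0" "bf A w1 u1 = 0" "bf A v1 u2 = 0" "bf A w1 u2 = 0" "bf A u2 u1 = 0"
      using f bs[OF v1(1) uc(1)] bs[OF w1(1) uc(1)] bs[OF v1(1) uc(2)] bs[OF w1(1) uc(2)] bs[OF uc(2) uc(1)] by auto
    note facts = f f' v1(3) w1(2) wv c_def[symmetric]
    show ?thesis
    proof (cases "\<exists>X Y. d * X^2 + e * Y^2 = 0 \<and> X \<noteq> 0")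
      case True
      then obtain X Y where XY: "d * X^2 + e * Y^2 = 0" "X \<noteq> 0" by auto
      define t where "t = Y / X"
      have "d * X^2 = e * Y^2" by (rule c2_eq[OF c2 XY(1)])
      hence et: "t * (t * e) = d" using XY(2) unfolding t_def by (simp add: field_simps power2_eq_square)
      show ?thesis
        by (rule final4[where ra="w1" and rb="w1 + c \<cdot>\<^sub>v v1" and rc="u1"
          and rd="t \<cdot>\<^sub>v u2" and c=c and x="d / c" and y=1, OF A sym],
        insert uc v1 w1 c de et, auto simp: bl facts c2s algebra_simps)
    next
      case False
      hence an: "\<And>X Y. d * X^2 + e * Y^2 = 0 \<Longrightarrow> X = 0" by auto
      define N where "N = mat_of_cols 4 [v1, w1, u1, u2]"
      have N: "N \<in> carrier_mat 4 4" unfolding N_def carrier_mat_def mat_of_cols_def by simp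
      have colN: "col N i = [v1, w1, u1, u2] ! i" if "i < 4" for i
        unfolding N_def using that uc v1 w1 by (subst col_mat_of_cols, auto simp: less_Suc_eq numeral_eq_Suc)
      have G: "transpose_mat N * A * N = Gm c d e"
      proof (rule eq_matI)
        fix i j assume i: "i < dim_row (Gm c d e)" and j: "j < dim_col (Gm c d e)"
        hence i4: "i < 4" and j4: "j < 4" using Gm_carrier[of c d e] by auto
        show "(transpose_mat N * A * N) $$ (i,j) = Gm c d e $$ (i,j)"
          unfolding entry_congr[OF A N i4 j4] colN[OF i4] colN[OF j4]
          using lt4[OF i4] lt4[OF j4] by (elim disjE) (simp_all add: Gm_def facts)
      qed (insert N A Gm_carrier[of c d e], auto)
      define Gi where "Gi = mat 4 4 (\<lambda>(i,j). [[c,1,0,0],[1,0,0,0],[0,0,1/d,0],[0,0,0,1/e]] ! i ! j)"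
      have Gi: "Gi \<in> carrier_mat 4 4" unfolding Gi_def by simp
      have GiG: "Gi * (transpose_mat N * A * N) = 1\<^sub>m 4"
      proof (rule eq_matI)
        fix i j assume i: "i < dim_row (1\<^sub>m 4 :: 'a mat)" and j: "j < dim_col (1\<^sub>m 4 :: 'a mat)"
        hence i4: "i < 4" and j4: "j < 4" by auto
        have "(Gi * Gm c d e) $$ (i,j) = (\<Sum>k\<in>{0..<4}. Gi $$ (i,k) * Gm c d e $$ (k,j))"
          using Gi Gm_carrier[of c d e] i4 j4 by (simp add: scalar_prod_def)
        also have "\<dots> = 1\<^sub>m 4 $$ (i,j)"
          unfolding sum4 using lt4[OF i4] lt4[OF j4] de c2s
          by (elim disjE) (simp_all add: Gi_def Gm_def)
        finally show "(Gi * (transpose_mat N * A * N)) $$ (i,j) = 1\<^sub>m 4 $$ (i,j)" unfolding G .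
      qed (insert Gi N A, auto)
      note ci = congr_inv[OF A N Gi GiG]
      have "TI (transpose_mat N * A * N) 4" by (rule TI_up[OF A N ci(4) ci(2) ti])
      hence T: "TI (Gm c d e) 4" unfolding G .
      have False using G_contra[OF c2 de(1) de(2) _ T] an by blast
      thus ?thesis ..
    qed
  qed
  define pr where "pr x = x + (bf A x w1 + c * bf A x v1) \<cdot>\<^sub>v v1 + bf A x v1 \<cdot>\<^sub>v w1" for x
  have prc: "pr x \<in> carrier_vec 4" if "x \<in> carrier_vec 4" for x
    unfolding pr_def using that v1 w1 by simp
  have prU: "Uv (pr x)" if x: "x \<in> carrier_vec 4" for x
    unfolding Uv_def using prc[OF x] x v1 w1 by (simp add: pr_def bl wv c_def[symmetric] c2s algebra_simps)
  let ?e = "\<lambda>k. unit_vec 4 k :: 'a vec"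
  show ?thesis
  proof (cases "\<exists>k<4. bf A (pr (?e k)) (pr (?e k)) \<noteq> 0")
    case True
    then obtain k where k: "k < 4" "bf A (pr (?e k)) (pr (?e k)) \<noteq> 0" by auto
    define u1 where "u1 = pr (?e k)"
    define d where "d = bf A u1 u1"
    have u1: "Uv u1" "d \<noteq> 0" "u1 \<in> carrier_vec 4" using prU prc k unfolding u1_def d_def by auto
    define pr2 where "pr2 x = pr x + (bf A (pr x) u1 / d) \<cdot>\<^sub>v u1" for x
    have pr2c: "pr2 x \<in> carrier_vec 4" if "x \<in> carrier_vec 4" for x
      unfolding pr2_def using that prc u1 by simp
    have pr2U: "Uv (pr2 x) \<and> bf A (pr2 x) u1 = 0" if x: "x \<in> carrier_vec 4" for x
    proof -
      have "Uv (pr x)" by (rule prU[OF x])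
      thus ?thesis using u1 prc[OF x] pr2c[OF x] v1 w1 unfolding pr2_def Uv_def d_def
        by (simp add: bl c2s)
    qed
    show ?thesis
    proof (cases "\<exists>l<4. bf A (pr2 (?e l)) (pr2 (?e l)) \<noteq> 0")
      case True
      then obtain l where l: "l < 4" "bf A (pr2 (?e l)) (pr2 (?e l)) \<noteq> 0" by auto
      show ?thesis
      proof (rule caseII[of u1 "pr2 (?e l)"])
        show "bf A u1 u1 \<noteq> 0" using u1 d_def by simp
        show "bf A u1 (pr2 (?e l)) = 0" using pr2U[OF unit_vec_carrier] bs[OF u1(3) pr2c[OF unit_vec_carrier]] by auto
      qed (insert u1 l pr2U[OF unit_vec_carrier], auto)
    next
      case False2: False
      show ?thesis
      proof (cases "\<exists>l<4. \<exists>m<4. bf A (pr2 (?e l)) (pr2 (?e m)) \<noteq> 0")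
        case True
        then obtain l m where lm: "l < 4" "m < 4" "bf A (pr2 (?e l)) (pr2 (?e m)) \<noteq> 0" by auto
        show ?thesis
          by (rule caseI[of "pr2 (?e l)" "pr2 (?e m)"], insert lm False2 pr2U[OF unit_vec_carrier], auto)
      next
        case False
        show ?thesis
        proof (rule FalseE, rule proj_contra[OF c2 A sym nd v1(1) w1(1) u1(3), where f="\<lambda>l. pr2 (?e l)"
            and \<alpha>="\<lambda>l. bf A (?e l) w1 + c * bf A (?e l) v1" and \<beta>="\<lambda>l. bf A (?e l) v1"
            and \<gamma>="\<lambda>l. bf A (pr (?e l)) u1 / d"])
          fix l :: nat assume l: "l < 4"
          show "pr2 (?e l) = ?e l + (bf A (?e l) w1 + c * bf A (?e l) v1) \<cdot>\<^sub>v v1 + bf A (?e l) v1 \<cdot>\<^sub>v w1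
            + (bf A (pr (?e l)) u1 / d) \<cdot>\<^sub>v u1" unfolding pr2_def pr_def ..
          show "bf A (pr2 (?e l)) v1 = 0" "bf A (pr2 (?e l)) w1 = 0" "bf A (pr2 (?e l)) u1 = 0"
            using pr2U[OF unit_vec_carrier] unfolding Uv_def by auto
        next
          fix l m :: nat assume "l < 4" "m < 4"
          thus "bf A (pr2 (?e l)) (pr2 (?e m)) = 0" using False by auto
        qed
      qed
    qed
  next
    case False1: False
    show ?thesis
    proof (cases "\<exists>l<4. \<exists>m<4. bf A (pr (?e l)) (pr (?e m)) \<noteq> 0")
      case True
      then obtain l m where lm: "l < 4" "m < 4" "bf A (pr (?e l)) (pr (?e m)) \<noteq> 0" by auto
      show ?thesis
        by (rule caseI[of "pr (?e l)" "pr (?e m)"], insert lm False1 prU[OF unit_vec_carrier], auto)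
    next
      case False
      show ?thesis
      proof (rule FalseE, rule proj_contra[OF c2 A sym nd v1(1) w1(1) v1(1), where f="\<lambda>l. pr (?e l)"
          and \<alpha>="\<lambda>l. bf A (?e l) w1 + c * bf A (?e l) v1" and \<beta>="\<lambda>l. bf A (?e l) v1"
          and \<gamma>="\<lambda>l. 0"])
        fix l :: nat assume l: "l < 4"
        show "pr (?e l) = ?e l + (bf A (?e l) w1 + c * bf A (?e l) v1) \<cdot>\<^sub>v v1 + bf A (?e l) v1 \<cdot>\<^sub>v w1
            + 0 \<cdot>\<^sub>v v1" unfolding pr_def by (rule eq_vecI) (use v1 w1 in auto)
        show "bf A (pr (?e l)) v1 = 0" "bf A (pr (?e l)) w1 = 0" "bf A (pr (?e l)) v1 = 0"
          using prU[OF unit_vec_carrier] unfolding Uv_def by auto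
      next
        fix l m :: nat assume "l < 4" "m < 4"
        thus "bf A (pr (?e l)) (pr (?e m)) = 0" using False by auto
      qed
    qed
  qed
qed



definition hat :: "'a vec \<Rightarrow> 'a vec \<Rightarrow> 'a vec" where
  "hat x0 x1 = vec 8 (\<lambda>i. if even i then x0 $ (i div 2) else x1 $ (i div 2))"

lemma hat_carrier[simp]: "hat x0 x1 \<in> carrier_vec 8" unfolding hat_def by simp
lemma dim_hat[simp]: "dim_vec (hat x0 x1) = 8" unfolding hat_def by simp

lemma hat_surj:
  assumes x: "x \<in> carrier_vec 8"
  shows "x = hat (vec 4 (\<lambda>i. x $ (2*i))) (vec 4 (\<lambda>i. x $ (2*i+1)))"
proof (rule eq_vecI)
  fix i assume "i < dim_vec (hat (vec 4 (\<lambda>i. x $ (2*i))) (vec 4 (\<lambda>i. x $ (2*i+1))))"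
  hence i: "i < 8" by (simp add: hat_def)
  have "i div 2 < 4" using i by simp
  thus "x $ i = hat (vec 4 (\<lambda>i. x $ (2*i))) (vec 4 (\<lambda>i. x $ (2*i+1))) $ i"
    using i by (auto simp: hat_def)
qed (insert x, simp add: hat_def)

lemma T_entry:
  fixes B :: "'a::field mat"
  assumes B: "B \<in> carrier_mat 4 4" and i: "i < 8" and j: "j < 8"
  shows "tensor_form B (pf1 \<alpha>) $$ (i,j) = B $$ (i div 2, j div 2) * (if i mod 2 = j mod 2 then (if i mod 2 = 0 then 1 else \<alpha>) else 0)"
proof -
  have "i mod 2 < 2" "j mod 2 < 2" by auto
  thus ?thesis using B i j by (simp add: tensor_form_def pf1_def)
qed

lemma T_carrier: "B \<in> carrier_mat 4 4 \<Longrightarrow> tensor_form B (pf1 \<alpha>) \<in> carrier_mat 8 8"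
  unfolding carrier_mat_def by simp

lemma bfT:
  fixes B :: "'a::field mat"
  assumes B: "B \<in> carrier_mat 4 4"
    and v: "x0 \<in> carrier_vec 4" "x1 \<in> carrier_vec 4" "y0 \<in> carrier_vec 4" "y1 \<in> carrier_vec 4"
  shows "bf (tensor_form B (pf1 \<alpha>)) (hat x0 x1) (hat y0 y1) = bf B x0 y0 + \<alpha> * bf B x1 y1"
proof -
  have mv: "(tensor_form B (pf1 \<alpha>) *\<^sub>v hat y0 y1) $ i =
      (\<Sum>j\<in>{0..<8}. tensor_form B (pf1 \<alpha>) $$ (i,j) * hat y0 y1 $ j)" if "i < 8" for i
    using that B T_carrier[OF B, of \<alpha>] by (auto simp: scalar_prod_def intro!: sum.cong)
  have mvB: "(B *\<^sub>v y) $ i = (\<Sum>j\<in>{0..<4}. B $$ (i,j) * y $ j)" if "i < 4" "y \<in> carrier_vec 4" for i y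
    using that B by (auto simp: scalar_prod_def intro!: sum.cong)
  have L: "bf (tensor_form B (pf1 \<alpha>)) (hat x0 x1) (hat y0 y1) =
     (\<Sum>i\<in>{0..<8}. hat x0 x1 $ i * (tensor_form B (pf1 \<alpha>) *\<^sub>v hat y0 y1) $ i)"
    unfolding bf_def scalar_prod_def using carrier_matD[OF B] by simp
  have R: "bf B u w = (\<Sum>i\<in>{0..<4}. u $ i * (B *\<^sub>v w) $ i)" if "u \<in> carrier_vec 4" for u w
    unfolding bf_def scalar_prod_def using that carrier_matD[OF B] by simp
  show ?thesis
    unfolding L R[OF v(1)] R[OF v(2)] sum8' sum4
    apply (simp del: index_mult_mat_vec add: mv mvB v)
    apply (simp add: sum8' sum4 T_entry[OF B] hat_def algebra_simps)
    done
qed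

lemma bf_expand4:
  fixes A :: "'a::field mat"
  assumes A: "A \<in> carrier_mat 4 4" and x: "x \<in> carrier_vec 4" and y: "y \<in> carrier_vec 4"
  shows "bf A x y = (\<Sum>i\<in>{0..<4}. \<Sum>j\<in>{0..<4}. x $ i * A $$ (i,j) * y $ j)"
  unfolding bf_def scalar_prod_def using A x y
  by (auto simp: sum_distrib_left mult.assoc scalar_prod_def intro!: sum.cong)

locale embc =
  fixes emb :: "'a::field \<Rightarrow> 'b::field" and s :: 'b and \<alpha> :: 'a
  assumes hom_add: "\<And>x y. emb (x + y) = emb x + emb y"
    and hom_mult: "\<And>x y. emb (x * y) = emb x * emb y"
    and hom_one: "emb 1 = 1"
    and sqrt: "s * s = emb \<alpha>"
    and nonsq: "\<not> (\<exists>x. x * x = \<alpha>)"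
begin

lemma emb0[simp]: "emb 0 = 0"
proof -
  have "emb 0 + emb 0 = emb 0 + 0" using hom_add[of 0 0] by (simp only: add_0_left add_0_right)
  thus ?thesis by (simp only: add_left_cancel)
qed

lemma emb_neg: "emb (- x) = - emb x"
proof -
  have "emb x + emb (- x) = 0" using hom_add[of x "-x"] by simp
  thus ?thesis by (metis add.commute eq_neg_iff_add_eq_0)
qed

lemma emb_nz: "x \<noteq> 0 \<Longrightarrow> emb x \<noteq> 0"
  using hom_mult[of x "inverse x"] hom_one by auto

lemma emb_eq0: "emb x = 0 \<longleftrightarrow> x = 0"
  using emb_nz by auto

lemma emb_inj: "emb x = emb y \<Longrightarrow> x = y"
proof -
  assume "emb x = emb y"
  hence "emb (x + - y) = 0" unfolding hom_add emb_neg by simp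
  hence "x + - y = 0" using emb_eq0 by blast
  thus "x = y" by simp
qed

lemma indep: assumes "emb u + emb v * s = 0" shows "u = 0 \<and> v = 0"
proof (cases "v = 0")
  case True thus ?thesis using assms emb_eq0 by simp
next
  case False
  have ev: "emb v \<noteq> 0" using emb_nz[OF False] .
  have "s = emb (- u / v)"
  proof -
    have "emb (- u / v) * emb v = emb (- u)" using hom_mult[of "- u / v" v] False by simp
    hence "emb (- u / v) = - emb u / emb v" using ev by (simp add: emb_neg field_simps)
    moreover have "s = - emb u / emb v" using assms ev by (simp add: field_simps eq_neg_iff_add_eq_0)
    ultimately show ?thesis by simp
  qed
  hence "emb ((- u / v) * (- u / v)) = emb \<alpha>" using sqrt hom_mult by metis
  hence "(- u / v) * (- u / v) = \<alpha>" by (rule emb_inj)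
  thus ?thesis using nonsq by blast
qed

lemma c2b: "(2::'a) = 0 \<Longrightarrow> (2::'b) = 0"
  using hom_add[of 1 1] hom_one by (metis emb0 one_add_one)

lemma emb_sum: "finite S \<Longrightarrow> emb (\<Sum>i\<in>S. f i) = (\<Sum>i\<in>S. emb (f i))"
  by (induction S rule: finite_induct) (auto simp: hom_add)

definition lift :: "'a vec \<Rightarrow> 'a vec \<Rightarrow> 'b vec" where
  "lift x0 x1 = vec 4 (\<lambda>i. emb (x0 $ i) + emb (x1 $ i) * s)"

lemma lift_carrier[simp]: "lift x0 x1 \<in> carrier_vec 4" unfolding lift_def by simp

lemma bfK:
  assumes B: "B \<in> carrier_mat 4 4"
    and v: "x0 \<in> carrier_vec 4" "x1 \<in> carrier_vec 4" "y0 \<in> carrier_vec 4" "y1 \<in> carrier_vec 4"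
  shows "bf (map_mat emb B) (lift x0 x1) (lift y0 y1) =
    emb (bf B x0 y0 + \<alpha> * bf B x1 y1) + emb (bf B x0 y1 + bf B x1 y0) * s"
proof -
  have BK: "map_mat emb B \<in> carrier_mat 4 4" using B by simp
  show ?thesis
    unfolding bf_expand4[OF BK lift_carrier lift_carrier] bf_expand4[OF B v(1) v(3)]
      bf_expand4[OF B v(2) v(4)] bf_expand4[OF B v(1) v(4)] bf_expand4[OF B v(2) v(3)]
    unfolding sum4 using B
    by (simp add: lift_def hom_add hom_mult sqrt[symmetric] algebra_simps)
qed

end



lemma mv_zero: "A \<in> carrier_mat n n \<Longrightarrow> A *\<^sub>v 0\<^sub>v n = (0\<^sub>v n :: 'a::field vec)"
  by (intro eq_vecI) auto

lemma bf_zero_r: "A \<in> carrier_mat n n \<Longrightarrow> x \<in> carrier_vec n \<Longrightarrow> bf A x (0\<^sub>v n) = (0::'a::field)"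
  unfolding bf_def by (simp add: mv_zero)

theorem lemma5p4:
  fixes B :: "'a::field mat" and \<alpha> :: 'a
    and emb :: "'a \<Rightarrow> 'b::field" and s :: 'b
  assumes char2: "(2::'a) = 0"
    and form: "sym_bil_form 4 B"
    and iso: "isotropic B"
    and alpha_unit: "\<alpha> \<noteq> 0"
    and alpha_nonsq: "\<not> (\<exists>x. x * x = \<alpha>)"
    and hom_add: "\<And>x y. emb (x + y) = emb x + emb y"
    and hom_mult: "\<And>x y. emb (x * y) = emb x * emb y"
    and hom_one: "emb 1 = 1"
    and sqrt: "s * s = emb \<alpha>"
    and gen: "\<And>z. \<exists>x y. z = emb x + emb y * s"
    and pf: "is_bil_pfister (tensor_form B (pf1 \<alpha>))"
  shows "similar_to_bil_pfister (map_mat emb B)"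
proof -
  interpret E: embc emb s \<alpha> using hom_add hom_mult hom_one sqrt alpha_nonsq by unfold_locales auto
  have B: "B \<in> carrier_mat 4 4" and Bs: "transpose_mat B = B" using form unfolding sym_bil_form_def by auto
  define T where "T = tensor_form B (pf1 \<alpha>)"
  have T: "T \<in> carrier_mat 8 8" unfolding T_def using T_carrier[OF B] .
  have bfT': "bf T (hat x0 x1) (hat y0 y1) = bf B x0 y0 + \<alpha> * bf B x1 y1"
    if "x0 \<in> carrier_vec 4" "x1 \<in> carrier_vec 4" "y0 \<in> carrier_vec 4" "y1 \<in> carrier_vec 4" for x0 x1 y0 y1
    unfolding T_def by (rule bfT[OF B that])
  have hs: "\<exists>x0 x1. x0 \<in> carrier_vec 4 \<and> x1 \<in> carrier_vec 4 \<and> x = hat x0 x1" if "x \<in> carrier_vec 8" for x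
    using hat_surj[OF that] by (intro exI conjI) (auto simp del: vec_eq_iff)
  obtain as where asnz: "\<forall>a\<in>set as. a \<noteq> 0" and isoT: "isometric T (pfister_mat as)"
    using pf unfolding is_bil_pfister_def T_def by auto
  from isoT obtain n P where Tn: "T \<in> carrier_mat n n" and Pn: "pfister_mat as \<in> carrier_mat n n"
    and P: "P \<in> carrier_mat n n" and Pinv: "invertible_mat P" and PTP: "transpose_mat P * T * P = pfister_mat as"
    unfolding isometric_def by auto
  have n8: "n = 8" using Tn T by auto
  have "2 ^ length as = (2::nat) ^ 3" using Pn dim_pf[of as] n8 by auto
  hence "length as = 3" by (simp only: power_inject_exp)
  then obtain a1 a2 a3 where as: "as = [a1, a2, a3]"
    by (metis (no_types) length_0_conv length_Suc_conv numeral_3_eq_3)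
  have anz: "a1 \<noteq> 0" "a2 \<noteq> 0" "a3 \<noteq> 0" using asnz as by auto
  note P = P[unfolded n8]
  obtain Q where PQ: "P * Q = 1\<^sub>m 8" "Q * P = 1\<^sub>m 8" and Q: "Q \<in> carrier_mat 8 8"
  proof -
    from Pinv obtain Q where "inverts_mat P Q" "inverts_mat Q P" unfolding invertible_mat_def by auto
    hence a: "P * Q = 1\<^sub>m 8" and b: "Q * P = 1\<^sub>m (dim_row Q)" using P unfolding inverts_mat_def by auto
    have c1: "dim_col Q = 8" using arg_cong[OF a, of dim_col] by simp
    have c2: "dim_row Q = 8" using arg_cong[OF b, of dim_col] P by simp
    have b': "Q * P = 1\<^sub>m 8" using b unfolding c2 .
    have Qc: "Q \<in> carrier_mat 8 8" unfolding carrier_mat_def using c1 c2 by simp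
    show ?thesis by (rule that[OF a b' Qc])
  qed
  have P8: "transpose_mat P * T * P = pfister_mat [a1, a2, a3]" using PTP unfolding as .
  have PQv: "P *\<^sub>v (Q *\<^sub>v w) = w" if "w \<in> carrier_vec 8" for w
    using that P Q PQ(1) by (simp add: assoc_mult_mat_vec[symmetric, of _ 8 8 _ 8])
  obtain v where v: "v \<in> carrier_vec 4" "v \<noteq> 0\<^sub>v 4" "bf B v v = 0"
    using iso B unfolding isotropic_def bf_def by auto
  define w where "w = hat v (0\<^sub>v 4)"
  have w: "w \<in> carrier_vec 8" "bf T w w = 0" unfolding w_def using bfT'[OF v(1) _ v(1), of "0\<^sub>v 4" "0\<^sub>v 4"] v B
    by (auto simp: bf_def)
  have wnz: "w \<noteq> 0\<^sub>v 8"
  proof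
    assume w0: "w = 0\<^sub>v 8"
    have "v = 0\<^sub>v 4"
    proof (rule eq_vecI)
      fix i assume "i < dim_vec (0\<^sub>v 4 :: 'a vec)" hence i: "i < 4" by simp
      have "w $ (2*i) = 0" using w0 i by simp
      thus "v $ i = 0\<^sub>v 4 $ i" using i by (simp add: w_def hat_def)
    qed (insert v, simp)
    thus False using v by simp
  qed
  define x0 where "x0 = Q *\<^sub>v w"
  have x0: "x0 \<in> carrier_vec 8" "x0 \<noteq> 0\<^sub>v 8" "bf (pfister_mat [a1,a2,a3]) x0 x0 = 0"
  proof -
    show x0c: "x0 \<in> carrier_vec 8" unfolding x0_def using Q w(1) by simp
    show "x0 \<noteq> 0\<^sub>v 8"
    proof
      assume "x0 = 0\<^sub>v 8"
      hence "w = P *\<^sub>v 0\<^sub>v 8" using PQv[OF w(1)] unfolding x0_def by simp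
      also have "P *\<^sub>v 0\<^sub>v 8 = 0\<^sub>v 8" using P by (intro eq_vecI) auto
      finally show False using wnz by simp
    qed
    show "bf (pfister_mat [a1,a2,a3]) x0 x0 = 0"
      unfolding P8[symmetric] bf_congr[OF T P x0c x0c] using PQv[OF w(1)] w unfolding x0_def by simp
  qed
  have TIP8: "TI (pfister_mat [a1,a2,a3]) 8" by (rule TI_P8[OF char2 anz x0])
  have TIT: "TI T 8" by (rule TI_down[OF T P Q PQ(1)], unfold P8, rule TIP8)
  have P8c: "pfister_mat [a1,a2,a3] \<in> carrier_mat 8 8" by (rule P8_carrier)
  have ndT: "w = 0\<^sub>v 8" if wc: "w \<in> carrier_vec 8" and rad: "\<forall>y\<in>carrier_vec 8. bf T y w = 0" for w
  proof -
    define w' where "w' = Q *\<^sub>v w"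
    have w'c: "w' \<in> carrier_vec 8" unfolding w'_def using Q wc by simp
    have "w' = 0\<^sub>v 8"
    proof (rule eq_vecI)
      fix k assume "k < dim_vec (0\<^sub>v 8 :: 'a vec)" hence k: "k < 8" by simp
      have e1: "bf (pfister_mat [a1,a2,a3]) (unit_vec 8 k) w' = bf T (P *\<^sub>v unit_vec 8 k) (P *\<^sub>v w')"
        using bf_congr[OF T P unit_vec_carrier w'c] unfolding P8 .
      have e2: "P *\<^sub>v w' = w" unfolding w'_def by (rule PQv[OF wc])
      have "bf (pfister_mat [a1,a2,a3]) (unit_vec 8 k) w' = 0" unfolding e1 e2 using rad P by simp
      hence "Dp a1 a2 a3 k * w' $ k = 0"
        using bf_unit_l[OF P8c w'c k] P8_mv[OF w'c k] by simp
      thus "w' $ k = 0\<^sub>v 8 $ k" using Dp_nz[OF anz k] k by simp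
    qed (insert w'c, simp)
    hence "w = P *\<^sub>v 0\<^sub>v 8" using PQv[OF wc] unfolding w'_def by simp
    also have "P *\<^sub>v 0\<^sub>v 8 = 0\<^sub>v 8" using P by (intro eq_vecI) auto
    finally show ?thesis .
  qed
  have ndB: "x = 0\<^sub>v 4" if xc: "x \<in> carrier_vec 4" and rad: "\<forall>y\<in>carrier_vec 4. bf B y x = 0" for x
  proof -
    have "hat x (0\<^sub>v 4) = 0\<^sub>v 8"
    proof (rule ndT)
      show "\<forall>y\<in>carrier_vec 8. bf T y (hat x (0\<^sub>v 4)) = 0"
      proof
        fix y :: "'a vec" assume "y \<in> carrier_vec 8"
        then obtain y0 y1 where y: "y0 \<in> carrier_vec 4" "y1 \<in> carrier_vec 4" "y = hat y0 y1" using hs by blast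
        show "bf T y (hat x (0\<^sub>v 4)) = 0" unfolding y(3) bfT'[OF y(1,2) xc zero_carrier_vec]
          using rad y B by (simp add: bf_zero_r)
      qed
    qed simp
    show ?thesis
    proof (rule eq_vecI)
      fix i assume "i < dim_vec (0\<^sub>v 4 :: 'a vec)" hence i: "i < 4" by simp
      have "hat x (0\<^sub>v 4) $ (2*i) = 0" using \<open>hat x (0\<^sub>v 4) = 0\<^sub>v 8\<close> i by simp
      thus "x $ i = 0\<^sub>v 4 $ i" using i by (simp add: hat_def)
    qed (insert xc, simp)
  qed
  define AK where "AK = map_mat emb B"
  have AK: "AK \<in> carrier_mat 4 4" unfolding AK_def using B by simp
  have Bij: "B $$ (j,i) = B $$ (i,j)" if "i < 4" "j < 4" for i j
    using arg_cong[OF Bs, of "\<lambda>M. M $$ (i,j)"] that B by simp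
  have AKs: "transpose_mat AK = AK" unfolding AK_def
    by (rule eq_matI, insert B Bij, auto)
  have c2K: "(2::'b) = 0" by (rule E.c2b[OF char2])
  have bsB: "bf B x y = bf B y x" if "x \<in> carrier_vec 4" "y \<in> carrier_vec 4" for x y
    using bf_sym[OF B Bs that] .
  have "\<forall>z. \<exists>xy. z = emb (fst xy) + emb (snd xy) * s" using gen by (metis fst_conv snd_conv)
  then obtain h where h: "\<forall>z. z = emb (fst (h z)) + emb (snd (h z)) * s" by metis
  have ls: "\<exists>x0 x1. x0 \<in> carrier_vec 4 \<and> x1 \<in> carrier_vec 4 \<and> Y = E.lift x0 x1" if Yc: "Y \<in> carrier_vec 4" for Y
  proof (intro exI conjI)
    show "Y = E.lift (vec 4 (\<lambda>i. fst (h (Y $ i)))) (vec 4 (\<lambda>i. snd (h (Y $ i))))"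
      by (rule eq_vecI, insert Yc h, auto simp: E.lift_def)
  qed auto
  have bK: "bf AK (E.lift x0 x1) (E.lift y0 y1) = emb (bf T (hat x0 x1) (hat y0 y1)) + emb (bf B x0 y1 + bf B x1 y0) * s"
    if "x0 \<in> carrier_vec 4" "x1 \<in> carrier_vec 4" "y0 \<in> carrier_vec 4" "y1 \<in> carrier_vec 4" for x0 x1 y0 y1
    unfolding AK_def E.bfK[OF B that] bfT'[OF that] ..
  have QK: "bf AK (E.lift x0 x1) (E.lift x0 x1) = emb (bf T (hat x0 x1) (hat x0 x1))"
    if "x0 \<in> carrier_vec 4" "x1 \<in> carrier_vec 4" for x0 x1
    unfolding bK[OF that that] bsB[OF that(2) that(1)] using char2 by simp
  have nd: "\<forall>X\<in>carrier_vec 4. AK *\<^sub>v X = 0\<^sub>v 4 \<longrightarrow> X = 0\<^sub>v 4"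
  proof (intro ballI impI)
    fix X :: "'b vec" assume Xc: "X \<in> carrier_vec 4" and AX: "AK *\<^sub>v X = 0\<^sub>v 4"
    obtain x0 x1 where x: "x0 \<in> carrier_vec 4" "x1 \<in> carrier_vec 4" "X = E.lift x0 x1" using ls[OF Xc] by blast
    have r: "bf B y x0 = 0 \<and> bf B y x1 = 0" if yc: "y \<in> carrier_vec 4" for y
    proof -
      have "bf AK (E.lift y (0\<^sub>v 4)) X = 0" unfolding bf_def AX by simp
      hence "emb (bf B y x0) + emb (bf B y x1) * s = 0"
        unfolding x(3) bK[OF yc zero_carrier_vec x(1,2)] bfT'[OF yc zero_carrier_vec x(1,2)]
        using bf_zero_l[OF B] x by simp
      thus ?thesis by (rule E.indep)
    qed
    have "x0 = 0\<^sub>v 4" by (rule ndB[OF x(1)], insert r, auto)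
    moreover have "x1 = 0\<^sub>v 4" by (rule ndB[OF x(2)], insert r, auto)
    ultimately show "X = 0\<^sub>v 4" unfolding x(3) by (intro eq_vecI) (auto simp: E.lift_def)
  qed
  obtain z0 z1 where z: "z0 \<in> carrier_vec 4" "z1 \<in> carrier_vec 4" "bf T (hat z0 z1) (hat z0 z1) = 1"
  proof -
    have e0: "bf (pfister_mat [a1,a2,a3]) (unit_vec 8 0) (unit_vec 8 0) = 1"
      using bf_unit_l[OF P8c unit_vec_carrier, of 0 0] P8_mv[OF unit_vec_carrier, of 0 a1 a2 a3]
      by (simp add: Dp_def)
    have "bf T (P *\<^sub>v unit_vec 8 0) (P *\<^sub>v unit_vec 8 0) = 1"
      using e0 bf_congr[OF T P unit_vec_carrier unit_vec_carrier] unfolding P8 by simp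
    moreover obtain z0 z1 where "z0 \<in> carrier_vec 4" "z1 \<in> carrier_vec 4" "P *\<^sub>v unit_vec 8 0 = hat z0 z1"
      using hs[of "P *\<^sub>v unit_vec 8 0"] P by auto
    ultimately show ?thesis using that by auto
  qed
  have TIK: "TI AK 4" unfolding TI_def
  proof (intro ballI impI)
    fix Y :: "'b vec" assume Yc: "Y \<in> carrier_vec 4" and qY: "bf AK Y Y \<noteq> 0"
    obtain y0 y1 where y: "y0 \<in> carrier_vec 4" "y1 \<in> carrier_vec 4" "Y = E.lift y0 y1" using ls[OF Yc] by blast
    have "bf T (hat y0 y1) (hat y0 y1) \<noteq> 0" using qY unfolding y(3) QK[OF y(1,2)] by auto
    then obtain xh where xh: "xh \<in> carrier_vec 8" "bf T xh xh = 0" "bf T xh (hat y0 y1) \<noteq> 0"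
      using TIT unfolding TI_def by auto
    obtain x0 x1 where x: "x0 \<in> carrier_vec 4" "x1 \<in> carrier_vec 4" "xh = hat x0 x1" using hs[OF xh(1)] by blast
    show "\<exists>X\<in>carrier_vec 4. bf AK X X = 0 \<and> bf AK X Y \<noteq> 0"
    proof (intro bexI conjI)
      show "bf AK (E.lift x0 x1) (E.lift x0 x1) = 0" unfolding QK[OF x(1,2)] using xh x by simp
      show "bf AK (E.lift x0 x1) Y \<noteq> 0"
      proof
        assume "bf AK (E.lift x0 x1) Y = 0"
        hence "emb (bf T (hat x0 x1) (hat y0 y1)) + emb (bf B x0 y1 + bf B x1 y0) * s = 0"
          unfolding y(3) bK[OF x(1,2) y(1,2)] .
        thus False using E.indep xh x by blast
      qed
    qed simp
  qed
  have vK: "E.lift v (0\<^sub>v 4) \<noteq> 0\<^sub>v 4"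
  proof
    assume a: "E.lift v (0\<^sub>v 4) = 0\<^sub>v 4"
    have "v = 0\<^sub>v 4"
    proof (rule eq_vecI)
      fix i assume "i < dim_vec (0\<^sub>v 4 :: 'a vec)" hence i: "i < 4" by simp
      have "E.lift v (0\<^sub>v 4) $ i = 0" using a i by simp
      hence "emb (v $ i) = 0" using i by (simp add: E.lift_def)
      thus "v $ i = 0\<^sub>v 4 $ i" using i E.emb_eq0 by simp
    qed (insert v, simp)
    thus False using v by simp
  qed
  have "similar_to_bil_pfister AK"
  proof (rule geom[OF c2K AK AKs nd _ _ _ vK _ TIK])
    show "E.lift z0 z1 \<in> carrier_vec 4" by simp
    show "bf AK (E.lift z0 z1) (E.lift z0 z1) \<noteq> 0" unfolding QK[OF z(1,2)] z(3) using hom_one by simp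
    show "E.lift v (0\<^sub>v 4) \<in> carrier_vec 4" by simp
    show "bf AK (E.lift v (0\<^sub>v 4)) (E.lift v (0\<^sub>v 4)) = 0" unfolding QK[OF v(1) zero_carrier_vec]
      using w unfolding w_def by simp
  qed
  thus ?thesis unfolding AK_def .
qed

end
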